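(* Let $n\ge r\ge2$ be integers and $H$ a noncomplete graph with $\gamma(H)=1$. Then $\gamma_{(1,0,0)}^s(K_n\circ H)=2$, $\gamma_{(1,0,0)}^s(K_{1,n-1}\circ H)=2$, and $\gamma_{(1,0,0)}^s(K_{n,r}\circ H)=3$ if $r=2$ and $=4$ otherwise.
   Context: All graphs are finite and simple; $\gamma(H)$ is the domination number; $K_n$ is the complete graph and $K_{a,b}$ the complete bipartite graph. For a graph $G$, a function $f:V(G)\to\{0,1,2\}$ is a $(1,0,0)$-dominating function if every vertex $v$ with $f(v)=0$ satisfies $\sum_{u\in N(v)}f(u)\ge1$ ($N(v)$ the open neighbourhood). For adjacent $v,u$ with $f(v)=0$, $f(u)>0$, $f_{u\to v}$ is defined by $f_{u\to v}(v)=1$, $f_{u\to v}(u)=f(u)-1$, $f_{u\to v}(x)=f(x)$ otherwise. $f$ is secure if for every $v$ with $f(v)=0$ there is $u\in N(v)$ with $f(u)>0$ such that $f_{u\to v}$ is $(1,0,0)$-dominating. $\gamma_{(1,0,0)}^s(G)$ is the minimum of $\sum_v f(v)$ over secure $(1,0,0)$-dominating functions. The lexicographic product $G\circ H$ has vertex set $V(G)\times V(H)$, with $(u,v)(x,y)$ an edge iff $ux\in E(G)$, or $u=x$ and $vy\in E(H)$. *)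

theory Defs
  imports Main
begin

definition sgraph :: "'a set \<Rightarrow> ('a \<Rightarrow> 'a \<Rightarrow> bool) \<Rightarrow> bool" where
  "sgraph V E \<longleftrightarrow> finite V \<and> (\<forall>u v. E u v \<longrightarrow> u \<in> V \<and> v \<in> V)
     \<and> (\<forall>u v. E u v \<longrightarrow> E v u) \<and> (\<forall>u. \<not> E u u)"

definition complete_graph :: "'a set \<Rightarrow> ('a \<Rightarrow> 'a \<Rightarrow> bool) \<Rightarrow> bool" where
  "complete_graph V E \<longleftrightarrow> (\<forall>u\<in>V. \<forall>v\<in>V. u \<noteq> v \<longrightarrow> E u v)"

definition dominating_set :: "'a set \<Rightarrow> ('a \<Rightarrow> 'a \<Rightarrow> bool) \<Rightarrow> 'a set \<Rightarrow> bool" where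
  "dominating_set V E D \<longleftrightarrow> D \<subseteq> V \<and> (\<forall>v\<in>V. v \<in> D \<or> (\<exists>u\<in>D. E v u))"

definition domination_number :: "'a set \<Rightarrow> ('a \<Rightarrow> 'a \<Rightarrow> bool) \<Rightarrow> nat" where
  "domination_number V E = (LEAST k. \<exists>D. dominating_set V E D \<and> card D = k)"

text \<open>(1,0,0)-dominating functions f : V -> {0,1,2} (values outside V are irrelevant).\<close>

definition dom100 :: "'a set \<Rightarrow> ('a \<Rightarrow> 'a \<Rightarrow> bool) \<Rightarrow> ('a \<Rightarrow> nat) \<Rightarrow> bool" where
  "dom100 V E f \<longleftrightarrow> (\<forall>v\<in>V. f v \<le> 2)
     \<and> (\<forall>v\<in>V. f v = 0 \<longrightarrow> (\<Sum>u\<in>{u\<in>V. E v u}. f u) \<ge> 1)"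

definition shift :: "('a \<Rightarrow> nat) \<Rightarrow> 'a \<Rightarrow> 'a \<Rightarrow> ('a \<Rightarrow> nat)" where
  "shift f u v = (f(v := 1))(u := f u - 1)"

definition secure_dom100 :: "'a set \<Rightarrow> ('a \<Rightarrow> 'a \<Rightarrow> bool) \<Rightarrow> ('a \<Rightarrow> nat) \<Rightarrow> bool" where
  "secure_dom100 V E f \<longleftrightarrow> dom100 V E f \<and>
     (\<forall>v\<in>V. f v = 0 \<longrightarrow> (\<exists>u\<in>V. E v u \<and> f u > 0 \<and> dom100 V E (shift f u v)))"

definition gamma_s100 :: "'a set \<Rightarrow> ('a \<Rightarrow> 'a \<Rightarrow> bool) \<Rightarrow> nat" where
  "gamma_s100 V E = (LEAST w. \<exists>f. secure_dom100 V E f \<and> (\<Sum>v\<in>V. f v) = w)"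

definition lex_edges :: "'a set \<Rightarrow> ('a \<Rightarrow> 'a \<Rightarrow> bool) \<Rightarrow> 'b set \<Rightarrow> ('b \<Rightarrow> 'b \<Rightarrow> bool)
    \<Rightarrow> ('a \<times> 'b) \<Rightarrow> ('a \<times> 'b) \<Rightarrow> bool" where
  "lex_edges VG EG VH EH p q \<longleftrightarrow> p \<in> VG \<times> VH \<and> q \<in> VG \<times> VH \<and>
     (EG (fst p) (fst q) \<or> (fst p = fst q \<and> EH (snd p) (snd q)))"

definition K_V :: "nat \<Rightarrow> nat set" where "K_V n = {..<n}"
definition K_E :: "nat \<Rightarrow> nat \<Rightarrow> nat \<Rightarrow> bool" where
  "K_E n i j \<longleftrightarrow> i < n \<and> j < n \<and> i \<noteq> j"

text \<open>Complete bipartite K_{a,b}: vertices 0..a+b-1, parts {0..<a} and {a..<a+b}.\<close>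
definition Kab_V :: "nat \<Rightarrow> nat \<Rightarrow> nat set" where "Kab_V a b = {..<a+b}"
definition Kab_E :: "nat \<Rightarrow> nat \<Rightarrow> nat \<Rightarrow> nat \<Rightarrow> bool" where
  "Kab_E a b i j \<longleftrightarrow> i < a + b \<and> j < a + b \<and> ((i < a) \<noteq> (j < a))"

end

theory Submission
  imports Defs
begin

lemma sum_prod_layers:
  assumes "finite A" "finite B"
  shows "sum f (A \<times> B) = (\<Sum>a\<in>A. \<Sum>b\<in>B. f (a,b))"
  by (simp add: sum.cartesian_product)

lemma key_pair:
  fixes f :: "'a \<times> 'b \<Rightarrow> nat"
  assumes fin: "finite VG" "finite VH" and c: "c \<in> VG" "\<not> EG c c"
    and ab: "a \<in> VH" "b \<in> VH" "a \<noteq> b" "\<not> EH b a"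
    and sec: "secure_dom100 (VG \<times> VH) (lex_edges VG EG VH EH) f"
    and fv: "f (c,a) = 0"
    and le1: "sum f {x \<in> VG \<times> VH. fst x = c \<or> EG c (fst x)} \<le> 1"
  shows False
proof -
  define V where "V = VG \<times> VH"
  define T where "T = {x \<in> VG \<times> VH. fst x = c \<or> EG c (fst x)}"
  define E where "E = lex_edges VG EG VH EH"
  have finT: "finite T" unfolding T_def using fin by auto
  have vV: "(c,a) \<in> V" using c ab V_def by auto
  from sec vV fv obtain u where uV: "u \<in> V" and Evu: "E (c,a) u" and fu: "f u > 0"
    and dg: "dom100 V E (shift f u (c,a))"
    unfolding secure_dom100_def V_def E_def by blast
  have uT: "u \<in> T" using uV Evu unfolding T_def V_def E_def lex_edges_def by auto
  have "f u \<le> sum f T" using finT uT by (intro member_le_sum) auto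
  hence fu1: "f u = 1" using fu le1 T_def by simp
  have others: "f x = 0" if "x \<in> T" "x \<noteq> u" for x
  proof -
    have "sum f {x,u} \<le> sum f T" using finT that uT by (intro sum_mono2) auto
    thus ?thesis using that fu1 le1 T_def by simp
  qed
  define g where "g = shift f u (c,a)"
  have uv: "u \<noteq> (c,a)" using fu fv by auto
  have gy: "g y = 0" if "y \<in> T" "y \<noteq> (c,a)" for y
    using that others fu1 unfolding g_def shift_def by auto
  have wV: "(c,b) \<in> V" using c ab V_def by auto
  have wT: "(c,b) \<in> T" using wV T_def V_def by auto
  have gw: "g (c,b) = 0" using gy wT ab by auto
  have "1 \<le> sum g {y \<in> V. E (c,b) y}" using dg wV gw unfolding dom100_def g_def by blast
  moreover have "sum g {y \<in> V. E (c,b) y} = 0"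
  proof (rule sum.neutral, intro ballI)
    fix y assume y: "y \<in> {y \<in> V. E (c,b) y}"
    hence "y \<in> T" "y \<noteq> (c,a)" using c ab unfolding T_def V_def E_def lex_edges_def by auto
    thus "g y = 0" by (rule gy)
  qed
  ultimately show False by simp
qed

lemma key:
  fixes f :: "'a \<times> 'b \<Rightarrow> nat"
  assumes fin: "finite VG" "finite VH" and c: "c \<in> VG" "\<not> EG c c"
    and pq: "p \<in> VH" "q \<in> VH" "p \<noteq> q" "\<not> EH p q" "\<not> EH q p"
    and sec: "secure_dom100 (VG \<times> VH) (lex_edges VG EG VH EH) f"
  shows "2 \<le> (\<Sum>g\<in>{g \<in> VG. g = c \<or> EG c g}. \<Sum>h\<in>VH. f (g,h))"
proof -
  have eq: "{x \<in> VG \<times> VH. fst x = c \<or> EG c (fst x)} = {g \<in> VG. g = c \<or> EG c g} \<times> VH" by auto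
  have s: "sum f {x \<in> VG \<times> VH. fst x = c \<or> EG c (fst x)} = (\<Sum>g\<in>{g \<in> VG. g = c \<or> EG c g}. \<Sum>h\<in>VH. f (g,h))"
    unfolding eq using fin by (simp add: sum_prod_layers)
  show ?thesis
  proof (rule ccontr)
    assume "\<not> ?thesis"
    hence le1: "sum f {x \<in> VG \<times> VH. fst x = c \<or> EG c (fst x)} \<le> 1" using s by simp
    have "f (c,p) + f (c,q) \<le> sum f {x \<in> VG \<times> VH. fst x = c \<or> EG c (fst x)}"
    proof -
      have "sum f {(c,p),(c,q)} \<le> sum f {x \<in> VG \<times> VH. fst x = c \<or> EG c (fst x)}"
        using fin c pq by (intro sum_mono2) auto
      thus ?thesis using pq by simp
    qed
    hence "f (c,p) = 0 \<or> f (c,q) = 0" using le1 by linarith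
    thus False
    proof
      assume "f (c,p) = 0"
      show False by (rule key_pair[OF fin c pq(1,2,3,5) sec \<open>f (c,p) = 0\<close> le1])
    next
      assume "f (c,q) = 0"
      show False by (rule key_pair[OF fin c pq(2,1) _ pq(4) sec \<open>f (c,q) = 0\<close> le1]) (use pq in auto)
    qed
  qed
qed

lemma dom_ind:
  assumes "finite V" "\<forall>w\<in>V. w \<notin> S \<longrightarrow> (\<exists>x\<in>S. x \<in> V \<and> E w x)"
  shows "dom100 V E (\<lambda>x. if x \<in> S then 1 else 0)"
  unfolding dom100_def
proof (intro conjI ballI impI)
  fix v assume v: "v \<in> V" "(if v \<in> S then 1 else 0::nat) = 0"
  then obtain x where x: "x \<in> S" "x \<in> V" "E v x" using assms by auto
  have "(if x \<in> S then 1 else 0::nat) \<le> (\<Sum>u\<in>{u\<in>V. E v u}. if u \<in> S then 1 else 0)"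
    by (rule member_le_sum) (use x assms(1) in auto)
  thus "1 \<le> (\<Sum>u\<in>{u\<in>V. E v u}. if u \<in> S then 1 else 0::nat)" using x by simp
qed auto

lemma shift_ind:
  assumes "u \<in> S" "v \<notin> S"
  shows "shift (\<lambda>x. if x \<in> S then 1 else 0::nat) u v = (\<lambda>x. if x \<in> insert v (S - {u}) then 1 else 0)"
  using assms unfolding shift_def by (auto simp: fun_eq_iff)

lemma secure_ind:
  assumes fin: "finite V" and SV: "S \<subseteq> V"
    and d: "\<forall>w\<in>V. w \<notin> S \<longrightarrow> (\<exists>x\<in>S. E w x)"
    and s: "\<forall>v\<in>V. v \<notin> S \<longrightarrow> (\<exists>u\<in>S. E v u \<and>
              (\<forall>w\<in>V. w \<notin> insert v (S - {u}) \<longrightarrow> (\<exists>x\<in>insert v (S - {u}). E w x)))"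
  shows "secure_dom100 V E (\<lambda>x. if x \<in> S then 1 else 0)"
  unfolding secure_dom100_def
proof (intro conjI ballI impI)
  show "dom100 V E (\<lambda>x. if x \<in> S then 1 else 0)"
    by (rule dom_ind[OF fin]) (use d SV in blast)
  fix v assume v: "v \<in> V" "(if v \<in> S then 1 else 0::nat) = 0"
  hence vS: "v \<notin> S" by (auto split: if_splits)
  then obtain u where u: "u \<in> S" "E v u"
    and w: "\<forall>w\<in>V. w \<notin> insert v (S - {u}) \<longrightarrow> (\<exists>x\<in>insert v (S - {u}). E w x)"
    using s v by blast
  have "dom100 V E (shift (\<lambda>x. if x \<in> S then 1 else 0) u v)"
    unfolding shift_ind[OF u(1) vS]
    by (rule dom_ind[OF fin]) (use w SV v in blast)
  thus "\<exists>u\<in>V. E v u \<and> 0 < (if u \<in> S then 1 else 0::nat) \<and> dom100 V E (shift (\<lambda>x. if x \<in> S then 1 else 0) u v)"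
    using u SV by auto
qed

lemma sum_ind:
  assumes "finite V" "S \<subseteq> V"
  shows "(\<Sum>x\<in>V. if x \<in> S then 1 else 0::nat) = card S"
proof -
  have "(\<Sum>x\<in>V. if x \<in> S then 1 else 0::nat) = card (V \<inter> S)"
    using assms(1) by (simp add: sum.If_cases)
  also have "V \<inter> S = S" using assms(2) by auto
  finally show ?thesis .
qed

lemma secure_two:
  assumes fin: "finite V" and x0: "x0 \<in> V" and u: "\<forall>v\<in>V. v \<noteq> x0 \<longrightarrow> E v x0"
  shows "secure_dom100 V E (\<lambda>x. if x = x0 then 2 else 0) \<and> (\<Sum>x\<in>V. if x = x0 then 2 else 0::nat) = 2"
proof (intro conjI)
  show "(\<Sum>x\<in>V. if x = x0 then 2 else 0::nat) = 2" using fin x0 by simp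
  have dom: "dom100 V E h" if h0: "\<forall>v\<in>V. h v \<le> 2" and hx: "h x0 \<ge> 1" and hz: "\<forall>v\<in>V. h v = 0 \<longrightarrow> v \<noteq> x0" for h
    unfolding dom100_def
  proof (intro conjI ballI impI)
    fix v assume v: "v \<in> V" "h v = 0"
    have "h x0 \<le> (\<Sum>u\<in>{u\<in>V. E v u}. h u)"
      by (rule member_le_sum) (use x0 fin u v hz in auto)
    thus "1 \<le> (\<Sum>u\<in>{u\<in>V. E v u}. h u)" using hx by simp
  qed (use h0 in auto)
  show "secure_dom100 V E (\<lambda>x. if x = x0 then 2 else 0)"
    unfolding secure_dom100_def
  proof (intro conjI ballI impI)
    show "dom100 V E (\<lambda>x. if x = x0 then 2 else 0)" by (rule dom) auto
    fix v assume v: "v \<in> V" "(if v = x0 then 2 else 0::nat) = 0"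
    hence vx: "v \<noteq> x0" by (auto split: if_splits)
    have "dom100 V E (shift (\<lambda>x. if x = x0 then 2 else 0) x0 v)"
      by (rule dom) (auto simp: shift_def)
    thus "\<exists>u\<in>V. E v u \<and> 0 < (if u = x0 then 2 else 0::nat) \<and> dom100 V E (shift (\<lambda>x. if x = x0 then 2 else 0) u v)"
      using x0 u v vx by auto
  qed
qed

lemma key_total:
  fixes f :: "'a \<times> 'b \<Rightarrow> nat"
  assumes fin: "finite VG" "finite VH" and c: "c \<in> VG" "\<not> EG c c"
    and pq: "p \<in> VH" "q \<in> VH" "p \<noteq> q" "\<not> EH p q" "\<not> EH q p"
    and sec: "secure_dom100 (VG \<times> VH) (lex_edges VG EG VH EH) f"
  shows "2 \<le> sum f (VG \<times> VH)"
proof -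
  have "2 \<le> (\<Sum>g\<in>{g \<in> VG. g = c \<or> EG c g}. \<Sum>h\<in>VH. f (g,h))" by (rule key[OF fin c pq sec])
  also have "\<dots> \<le> (\<Sum>g\<in>VG. \<Sum>h\<in>VH. f (g,h))" using fin by (intro sum_mono2) auto
  also have "\<dots> = sum f (VG \<times> VH)" using fin by (simp add: sum_prod_layers)
  finally show ?thesis .
qed

lemma least_eq:
  assumes "\<exists>f. secure_dom100 V E f \<and> (\<Sum>v\<in>V. f v) = w"
    and "\<And>f. secure_dom100 V E f \<Longrightarrow> w \<le> (\<Sum>v\<in>V. f v)"
  shows "gamma_s100 V E = w"
  unfolding gamma_s100_def
  by (rule Least_equality) (use assms in auto)

lemma concat_sum: "(\<Sum>g<(n::nat)+r. L g) = (\<Sum>g<n. L g) + (\<Sum>g=n..<n+r. L g)"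
  using sum.atLeastLessThan_concat[of 0 n "n+r" L] by (simp add: lessThan_atLeast0)

lemma kab_nbA: "c < n \<Longrightarrow> {g \<in> Kab_V n r. g = c \<or> Kab_E n r c g} = insert c {n..<n+r}"
  by (auto simp: Kab_E_def Kab_V_def)

lemma kab_nbB: "n \<le> c \<Longrightarrow> c < n + r \<Longrightarrow> {g \<in> Kab_V n r. g = c \<or> Kab_E n r c g} = insert c {..<n}"
  by (auto simp: Kab_E_def Kab_V_def)

lemma kab_lower:
  fixes f :: "nat \<times> 'b \<Rightarrow> nat"
  assumes finH: "finite VH" and n: "n \<ge> 2" and r: "r \<ge> 2"
    and pq: "p \<in> VH" "q \<in> VH" "p \<noteq> q" "\<not> EH p q" "\<not> EH q p"
    and sec: "secure_dom100 (Kab_V n r \<times> VH) (lex_edges (Kab_V n r) (Kab_E n r) VH EH) f"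
  shows "3 \<le> sum f (Kab_V n r \<times> VH) \<and> (r \<ge> 3 \<longrightarrow> n \<ge> 3 \<longrightarrow> 4 \<le> sum f (Kab_V n r \<times> VH))"
proof -
  define L where "L g = (\<Sum>h\<in>VH. f (g,h))" for g
  define WA where "WA = (\<Sum>g<n. L g)"
  define WB where "WB = (\<Sum>g=n..<n+r. L g)"
  have finG: "finite (Kab_V n r)" by (simp add: Kab_V_def)
  have tot: "sum f (Kab_V n r \<times> VH) = WA + WB"
    using finG finH by (simp add: sum_prod_layers Kab_V_def WA_def WB_def L_def concat_sum)
  have kc: "2 \<le> (\<Sum>g\<in>{g \<in> Kab_V n r. g = c \<or> Kab_E n r c g}. L g)" if "c < n + r" for c
    unfolding L_def
    by (rule key[OF finG finH _ _ pq sec]) (use that in \<open>auto simp: Kab_V_def Kab_E_def\<close>)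
  have kA: "2 \<le> L c + WB" if "c < n" for c
  proof -
    have "(\<Sum>g\<in>{g \<in> Kab_V n r. g = c \<or> Kab_E n r c g}. L g) = L c + WB"
      unfolding kab_nbA[OF that] WB_def using that by (subst sum.insert) auto
    thus ?thesis using kc[of c] that by simp
  qed
  have kB: "2 \<le> L c + WA" if "n \<le> c" "c < n + r" for c
  proof -
    have "(\<Sum>g\<in>{g \<in> Kab_V n r. g = c \<or> Kab_E n r c g}. L g) = L c + WA"
      unfolding kab_nbB[OF that] WA_def using that by (subst sum.insert) auto
    thus ?thesis using kc[of c] that by simp
  qed
  have A2: "L 0 + L 1 \<le> WA"
  proof -
    have "(\<Sum>g\<in>{0,1}. L g) \<le> WA" unfolding WA_def using n by (intro sum_mono2) auto
    thus ?thesis by simp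
  qed
  have B2: "L n + L (n+1) \<le> WB"
  proof -
    have "(\<Sum>g\<in>{n,n+1}. L g) \<le> WB" unfolding WB_def using r by (intro sum_mono2) auto
    thus ?thesis by simp
  qed
  have A3: "L 0 + L 1 + L 2 \<le> WA" if "n \<ge> 3"
  proof -
    have "(\<Sum>g\<in>{0,1,2}. L g) \<le> WA" unfolding WA_def using that by (intro sum_mono2) auto
    thus ?thesis by simp
  qed
  have B3: "L n + L (n+1) + L (n+2) \<le> WB" if "r \<ge> 3"
  proof -
    have "(\<Sum>g\<in>{n,n+1,n+2}. L g) \<le> WB" unfolding WB_def using that by (intro sum_mono2) auto
    thus ?thesis by simp
  qed
  have a0: "2 \<le> L 0 + WB" "2 \<le> L 1 + WB" using kA n by auto
  have b0: "2 \<le> L n + WA" "2 \<le> L (n+1) + WA" using kB r by auto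
  have "3 \<le> WA + WB" using a0 b0 A2 B2 by linarith
  moreover have "4 \<le> WA + WB" if "r \<ge> 3" "n \<ge> 3"
  proof -
    have "2 \<le> L 2 + WB" using kA that by auto
    moreover have "2 \<le> L (n+2) + WA" using kB that by auto
    ultimately show ?thesis using a0 b0 A3[OF that(2)] B3[OF that(1)] by (cases "WB \<le> 1"; cases "WA \<le> 1"; linarith)
  qed
  ultimately show ?thesis using tot by auto
qed

lemma kab_edge:
  assumes "g < n + r" "g' < n + r" "(g < n) \<noteq> (g' < n)" "h \<in> VH" "h' \<in> VH"
  shows "lex_edges (Kab_V n r) (Kab_E n r) VH EH (g,h) (g',h')"
  using assms by (simp add: lex_edges_def Kab_V_def Kab_E_def)

lemma kab_upper3:
  fixes VH :: "'b set"
  assumes finH: "finite VH" and h0: "h0 \<in> VH" "\<forall>h\<in>VH. h \<noteq> h0 \<longrightarrow> EH h h0" and n: "n \<ge> 2"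
  shows "\<exists>f. secure_dom100 (Kab_V n 2 \<times> VH) (lex_edges (Kab_V n 2) (Kab_E n 2) VH EH) f
           \<and> (\<Sum>v\<in>Kab_V n 2 \<times> VH. f v) = 3"
proof -
  define V where "V = Kab_V n 2 \<times> VH"
  define E where "E = lex_edges (Kab_V n 2) (Kab_E n 2) VH EH"
  define S where "S = {(0,h0),(n,h0),(n+1,h0)}"
  have finV: "finite V" using finH by (simp add: V_def Kab_V_def)
  have SV: "S \<subseteq> V" using h0 n by (auto simp: S_def V_def Kab_V_def)
  have cS: "card S = 3" using n by (simp add: S_def)
  have d: "\<forall>w\<in>V. w \<notin> S \<longrightarrow> (\<exists>x\<in>S. E w x)"
  proof (intro ballI impI)
    fix w assume "w \<in> V" "w \<notin> S"
    then obtain g h where w: "w = (g,h)" "g < n + 2" "h \<in> VH" by (auto simp: V_def Kab_V_def)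
    show "\<exists>x\<in>S. E w x"
    proof (cases "g < n")
      case True
      hence "E w (n,h0)" using w h0 unfolding E_def by (auto simp: lex_edges_def Kab_V_def Kab_E_def)
      thus ?thesis by (auto simp: S_def)
    next
      case False
      hence "E w (0,h0)" using w h0 n unfolding E_def by (auto simp: lex_edges_def Kab_V_def Kab_E_def)
      thus ?thesis by (auto simp: S_def)
    qed
  qed
  have s: "\<forall>v\<in>V. v \<notin> S \<longrightarrow> (\<exists>u\<in>S. E v u \<and>
              (\<forall>w\<in>V. w \<notin> insert v (S - {u}) \<longrightarrow> (\<exists>x\<in>insert v (S - {u}). E w x)))"
  proof (intro ballI impI)
    fix v assume vV: "v \<in> V" and vS: "v \<notin> S"
    then obtain g h where v: "v = (g,h)" "g < n + 2" "h \<in> VH" by (auto simp: V_def Kab_V_def)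
    show "\<exists>u\<in>S. E v u \<and> (\<forall>w\<in>V. w \<notin> insert v (S - {u}) \<longrightarrow> (\<exists>x\<in>insert v (S - {u}). E w x))"
    proof (cases "g < n")
      case True
      have "E v (n,h0)" using v h0 True unfolding E_def by (auto simp: lex_edges_def Kab_V_def Kab_E_def)
      moreover have "\<forall>w\<in>V. \<exists>x\<in>insert v (S - {(n,h0)}). E w x"
      proof
        fix w assume "w \<in> V"
        then obtain g' h' where w: "w = (g',h')" "g' < n + 2" "h' \<in> VH" by (auto simp: V_def Kab_V_def)
        show "\<exists>x\<in>insert v (S - {(n,h0)}). E w x"
        proof (cases "g' < n")
          case True
          hence "E w (n+1,h0)" using w h0 unfolding E_def by (auto simp: lex_edges_def Kab_V_def Kab_E_def)
          thus ?thesis by (auto simp: S_def)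
        next
          case False
          hence "E w v" using w v \<open>g < n\<close> unfolding E_def by (auto simp: lex_edges_def Kab_V_def Kab_E_def)
          thus ?thesis by auto
        qed
      qed
      ultimately show ?thesis by (auto simp: S_def)
    next
      case False
      hence g: "g = n \<or> g = n + 1" using v by auto
      hence hh: "h \<noteq> h0" using vS v by (auto simp: S_def)
      have uS: "(g,h0) \<in> S" using g by (auto simp: S_def)
      have "E v (g,h0)" using v h0 hh unfolding E_def by (auto simp: lex_edges_def Kab_V_def)
      moreover have "\<forall>w\<in>V. \<exists>x\<in>insert v (S - {(g,h0)}). E w x"
      proof
        fix w assume "w \<in> V"
        then obtain g' h' where w: "w = (g',h')" "g' < n + 2" "h' \<in> VH" by (auto simp: V_def Kab_V_def)
        show "\<exists>x\<in>insert v (S - {(g,h0)}). E w x"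
        proof (cases "g' < n")
          case True
          hence "E w v" using w v \<open>\<not> g < n\<close> unfolding E_def by (auto simp: lex_edges_def Kab_V_def Kab_E_def)
          thus ?thesis by auto
        next
          case False
          hence "E w (0,h0)" using w h0 n unfolding E_def by (auto simp: lex_edges_def Kab_V_def Kab_E_def)
          moreover have "(0,h0) \<in> S - {(g,h0)}" using g n by (auto simp: S_def)
          ultimately show ?thesis by blast
        qed
      qed
      ultimately show ?thesis using uS by blast
    qed
  qed
  have "secure_dom100 V E (\<lambda>x. if x \<in> S then 1 else 0)" by (rule secure_ind[OF finV SV d s])
  moreover have "(\<Sum>x\<in>V. if x \<in> S then 1 else 0::nat) = 3" using sum_ind[OF finV SV] cS by simp
  ultimately show ?thesis unfolding V_def E_def by blast
qed

lemma kab_upper4: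
  fixes VH :: "'b set"
  assumes finH: "finite VH" and h0: "h0 \<in> VH" and n: "n \<ge> 2" and r: "r \<ge> 2"
  shows "\<exists>f. secure_dom100 (Kab_V n r \<times> VH) (lex_edges (Kab_V n r) (Kab_E n r) VH EH) f
           \<and> (\<Sum>v\<in>Kab_V n r \<times> VH. f v) = 4"
proof -
  define V where "V = Kab_V n r \<times> VH"
  define E where "E = lex_edges (Kab_V n r) (Kab_E n r) VH EH"
  define S where "S = {(0,h0),(1,h0),(n,h0),(n+1,h0)}"
  have finV: "finite V" using finH by (simp add: V_def Kab_V_def)
  have SV: "S \<subseteq> V" using h0 n r by (auto simp: S_def V_def Kab_V_def)
  have cS: "card S = 4" using n by (simp add: S_def)
  have d: "\<forall>w\<in>V. w \<notin> S \<longrightarrow> (\<exists>x\<in>S. E w x)"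
  proof (intro ballI impI)
    fix w assume "w \<in> V" "w \<notin> S"
    then obtain g h where w: "w = (g,h)" "g < n + r" "h \<in> VH" by (auto simp: V_def Kab_V_def)
    show "\<exists>x\<in>S. E w x"
    proof (cases "g < n")
      case True
      hence "E w (n,h0)" using w h0 r unfolding E_def by (auto simp: lex_edges_def Kab_V_def Kab_E_def)
      thus ?thesis by (auto simp: S_def)
    next
      case False
      hence "E w (0,h0)" using w h0 n unfolding E_def by (auto simp: lex_edges_def Kab_V_def Kab_E_def)
      thus ?thesis by (auto simp: S_def)
    qed
  qed
  have s: "\<forall>v\<in>V. v \<notin> S \<longrightarrow> (\<exists>u\<in>S. E v u \<and>
              (\<forall>w\<in>V. w \<notin> insert v (S - {u}) \<longrightarrow> (\<exists>x\<in>insert v (S - {u}). E w x)))"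
  proof (intro ballI impI)
    fix v assume vV: "v \<in> V" and vS: "v \<notin> S"
    then obtain g h where v: "v = (g,h)" "g < n + r" "h \<in> VH" by (auto simp: V_def Kab_V_def)
    show "\<exists>u\<in>S. E v u \<and> (\<forall>w\<in>V. w \<notin> insert v (S - {u}) \<longrightarrow> (\<exists>x\<in>insert v (S - {u}). E w x))"
    proof (cases "g < n")
      case True
      have "E v (n,h0)" using v h0 True r unfolding E_def by (auto simp: lex_edges_def Kab_V_def Kab_E_def)
      moreover have "\<forall>w\<in>V. \<exists>x\<in>insert v (S - {(n,h0)}). E w x"
      proof
        fix w assume "w \<in> V"
        then obtain g' h' where w: "w = (g',h')" "g' < n + r" "h' \<in> VH" by (auto simp: V_def Kab_V_def)
        show "\<exists>x\<in>insert v (S - {(n,h0)}). E w x"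
        proof (cases "g' < n")
          case True
          hence "E w (n+1,h0)" using w h0 r unfolding E_def by (auto simp: lex_edges_def Kab_V_def Kab_E_def)
          thus ?thesis by (auto simp: S_def)
        next
          case False
          hence "E w v" using w v \<open>g < n\<close> unfolding E_def by (auto simp: lex_edges_def Kab_V_def Kab_E_def)
          thus ?thesis by auto
        qed
      qed
      ultimately show ?thesis by (auto simp: S_def)
    next
      case False
      have "E v (0,h0)" using v h0 False n unfolding E_def by (auto simp: lex_edges_def Kab_V_def Kab_E_def)
      moreover have "\<forall>w\<in>V. \<exists>x\<in>insert v (S - {(0,h0)}). E w x"
      proof
        fix w assume "w \<in> V"
        then obtain g' h' where w: "w = (g',h')" "g' < n + r" "h' \<in> VH" by (auto simp: V_def Kab_V_def)
        show "\<exists>x\<in>insert v (S - {(0,h0)}). E w x"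
        proof (cases "g' < n")
          case True
          hence "E w v" using w v \<open>\<not> g < n\<close> unfolding E_def by (auto simp: lex_edges_def Kab_V_def Kab_E_def)
          thus ?thesis by auto
        next
          case False
          hence "E w (1,h0)" using w h0 n unfolding E_def by (auto simp: lex_edges_def Kab_V_def Kab_E_def)
          thus ?thesis by (auto simp: S_def)
        qed
      qed
      ultimately show ?thesis by (auto simp: S_def)
    qed
  qed
  have "secure_dom100 V E (\<lambda>x. if x \<in> S then 1 else 0)" by (rule secure_ind[OF finV SV d s])
  moreover have "(\<Sum>x\<in>V. if x \<in> S then 1 else 0::nat) = 4" using sum_ind[OF finV SV] cS by simp
  ultimately show ?thesis unfolding V_def E_def by blast
qed

theorem corollary16:
  fixes VH :: "'b set" and EH :: "'b \<Rightarrow> 'b \<Rightarrow> bool" and n r :: nat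
  assumes "sgraph VH EH" and "\<not> complete_graph VH EH"
    and "domination_number VH EH = 1"
    and "n \<ge> r" and "r \<ge> 2"
  shows "gamma_s100 (K_V n \<times> VH) (lex_edges (K_V n) (K_E n) VH EH) = 2
    \<and> gamma_s100 (Kab_V 1 (n - 1) \<times> VH) (lex_edges (Kab_V 1 (n - 1)) (Kab_E 1 (n - 1)) VH EH) = 2
    \<and> gamma_s100 (Kab_V n r \<times> VH) (lex_edges (Kab_V n r) (Kab_E n r) VH EH)
        = (if r = 2 then 3 else 4)"
proof -
  have finH: "finite VH" and symH: "\<And>u v. EH u v \<Longrightarrow> EH v u"
    using assms(1) unfolding sgraph_def by auto
  have n: "n \<ge> 2" using assms by simp
  have "\<exists>D. dominating_set VH EH D \<and> card D = domination_number VH EH"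
    unfolding domination_number_def
    by (rule LeastI_ex) (rule exI[of _ "card VH"], rule exI[of _ VH], auto simp: dominating_set_def)
  then obtain D where D: "dominating_set VH EH D" "card D = 1" using assms(3) by auto
  then obtain h0 where "D = {h0}" using D(2) card_1_singletonE by blast
  hence h0: "h0 \<in> VH" "\<forall>h\<in>VH. h \<noteq> h0 \<longrightarrow> EH h h0"
    using D unfolding dominating_set_def by auto
  obtain p q where pq0: "p \<in> VH" "q \<in> VH" "p \<noteq> q" "\<not> EH p q"
    using assms(2) unfolding complete_graph_def by auto
  have pq: "p \<in> VH" "q \<in> VH" "p \<noteq> q" "\<not> EH p q" "\<not> EH q p"
    using pq0 symH by auto
  have P1: "gamma_s100 (K_V n \<times> VH) (lex_edges (K_V n) (K_E n) VH EH) = 2"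
  proof (rule least_eq)
    have "secure_dom100 (K_V n \<times> VH) (lex_edges (K_V n) (K_E n) VH EH) (\<lambda>x. if x = (0,h0) then 2 else 0)
      \<and> (\<Sum>x\<in>K_V n \<times> VH. if x = (0,h0) then 2 else 0::nat) = 2"
      by (rule secure_two) (use finH h0 n in \<open>auto simp: K_V_def K_E_def lex_edges_def\<close>)
    thus "\<exists>f. secure_dom100 (K_V n \<times> VH) (lex_edges (K_V n) (K_E n) VH EH) f \<and> (\<Sum>v\<in>K_V n \<times> VH. f v) = 2"
      by blast
  next
    fix f assume "secure_dom100 (K_V n \<times> VH) (lex_edges (K_V n) (K_E n) VH EH) f"
    thus "2 \<le> (\<Sum>v\<in>K_V n \<times> VH. f v)"
      by (intro key_total[OF _ finH _ _ pq, of _ 0]) (use n in \<open>auto simp: K_V_def K_E_def\<close>)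
  qed
  have P2: "gamma_s100 (Kab_V 1 (n - 1) \<times> VH) (lex_edges (Kab_V 1 (n - 1)) (Kab_E 1 (n - 1)) VH EH) = 2"
  proof (rule least_eq)
    have "secure_dom100 (Kab_V 1 (n - 1) \<times> VH) (lex_edges (Kab_V 1 (n - 1)) (Kab_E 1 (n - 1)) VH EH) (\<lambda>x. if x = (0,h0) then 2 else 0)
      \<and> (\<Sum>x\<in>Kab_V 1 (n - 1) \<times> VH. if x = (0,h0) then 2 else 0::nat) = 2"
      by (rule secure_two) (use finH h0 n in \<open>auto simp: Kab_V_def Kab_E_def lex_edges_def\<close>)
    thus "\<exists>f. secure_dom100 (Kab_V 1 (n - 1) \<times> VH) (lex_edges (Kab_V 1 (n - 1)) (Kab_E 1 (n - 1)) VH EH) f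
       \<and> (\<Sum>v\<in>Kab_V 1 (n - 1) \<times> VH. f v) = 2"
      by blast
  next
    fix f assume "secure_dom100 (Kab_V 1 (n - 1) \<times> VH) (lex_edges (Kab_V 1 (n - 1)) (Kab_E 1 (n - 1)) VH EH) f"
    thus "2 \<le> (\<Sum>v\<in>Kab_V 1 (n - 1) \<times> VH. f v)"
      by (intro key_total[OF _ finH _ _ pq, of _ 0]) (use n in \<open>auto simp: Kab_V_def Kab_E_def\<close>)
  qed
  have P3: "gamma_s100 (Kab_V n r \<times> VH) (lex_edges (Kab_V n r) (Kab_E n r) VH EH) = (if r = 2 then 3 else 4)"
  proof (cases "r = 2")
    case True
    show ?thesis unfolding True
    proof (simp, rule least_eq)
      show "\<exists>f. secure_dom100 (Kab_V n 2 \<times> VH) (lex_edges (Kab_V n 2) (Kab_E n 2) VH EH) f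
           \<and> (\<Sum>v\<in>Kab_V n 2 \<times> VH. f v) = 3"
        by (rule kab_upper3[where EH=EH, OF finH h0(1) h0(2) n])
    next
      fix f assume "secure_dom100 (Kab_V n 2 \<times> VH) (lex_edges (Kab_V n 2) (Kab_E n 2) VH EH) f"
      thus "3 \<le> (\<Sum>v\<in>Kab_V n 2 \<times> VH. f v)" using kab_lower[OF finH n _ pq] by auto
    qed
  next
    case False
    show ?thesis
    proof (simp add: False, rule least_eq)
      show "\<exists>f. secure_dom100 (Kab_V n r \<times> VH) (lex_edges (Kab_V n r) (Kab_E n r) VH EH) f
           \<and> (\<Sum>v\<in>Kab_V n r \<times> VH. f v) = 4"
        by (rule kab_upper4[OF finH h0(1) n assms(5)])
    next
      fix f assume "secure_dom100 (Kab_V n r \<times> VH) (lex_edges (Kab_V n r) (Kab_E n r) VH EH) f"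
      thus "4 \<le> (\<Sum>v\<in>Kab_V n r \<times> VH. f v)" using kab_lower[OF finH n assms(5) pq] False assms(4,5) by auto
    qed
  qed
  show ?thesis using P1 P2 P3 by blast
qed

end
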